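(* For any set $X$, the free inverse monoid $\operatorname{FIM}(X)$, regarded as an $F$-inverse monoid, is given by the presentation $\operatorname{FInv}\langle X\mid \operatorname{red}(w)=w^{\mathfrak m},\ w\in(X\cup X^{-1})^*\rangle$.
   Context: $\operatorname{FIM}(X)$ is $F$-inverse, with $(w_{\operatorname{FIM}(X)})^{\mathfrak m}=\operatorname{red}(w)_{\operatorname{FIM}(X)}$, where $\operatorname{red}(w)$ is the freely reduced form of the word $w$ and $s^{\mathfrak m}$ denotes the greatest element of the $\sigma$-class of $s$ (the $F$-inverse monoid signature being $(\cdot,1,{}^{-1},{}^{\mathfrak m})$). $\operatorname{FInv}\langle X\mid R\rangle$ denotes the quotient of the free $F$-inverse monoid on $X$ by the congruence generated by the relation $R$ on terms $u_0v_1^{\mathfrak m}u_1\cdots v_n^{\mathfrak m}u_n$ ($u_i,v_i\in(X\cup X^{-1})^*$). The claim is that this presented $F$-inverse monoid is isomorphic to $\operatorname{FIM}(X)$ via the map sending each generator $x$ to $x$. *)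

theory Defs
  imports Main
begin

record 'm fsig =
  fcar :: "'m set"
  fmul :: "'m \<Rightarrow> 'm \<Rightarrow> 'm"
  fone :: "'m"
  finv :: "'m \<Rightarrow> 'm"
  fmx  :: "'m \<Rightarrow> 'm"

definition inv_monoid :: "('m, 'z) fsig_scheme \<Rightarrow> bool" where
  "inv_monoid S \<longleftrightarrow>
     fone S \<in> fcar S \<and>
     (\<forall>a\<in>fcar S. \<forall>b\<in>fcar S. fmul S a b \<in> fcar S) \<and>
     (\<forall>a\<in>fcar S. \<forall>b\<in>fcar S. \<forall>c\<in>fcar S. fmul S (fmul S a b) c = fmul S a (fmul S b c)) \<and>
     (\<forall>a\<in>fcar S. fmul S (fone S) a = a \<and> fmul S a (fone S) = a) \<and>
     (\<forall>a\<in>fcar S. finv S a \<in> fcar S \<and>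
        fmul S (fmul S a (finv S a)) a = a \<and> fmul S (fmul S (finv S a) a) (finv S a) = finv S a) \<and>
     (\<forall>a\<in>fcar S. \<forall>b\<in>fcar S. fmul S (fmul S a b) a = a \<and> fmul S (fmul S b a) b = b \<longrightarrow> b = finv S a)"

definition nle :: "('m, 'z) fsig_scheme \<Rightarrow> 'm \<Rightarrow> 'm \<Rightarrow> bool" where
  "nle S a b \<longleftrightarrow> (\<exists>e\<in>fcar S. fmul S e e = e \<and> a = fmul S e b)"

definition fsigma :: "('m, 'z) fsig_scheme \<Rightarrow> 'm \<Rightarrow> 'm \<Rightarrow> bool" where
  "fsigma S a b \<longleftrightarrow> (\<exists>c\<in>fcar S. nle S c a \<and> nle S c b)"

definition F_inverse :: "('m, 'z) fsig_scheme \<Rightarrow> bool" where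
  "F_inverse S \<longleftrightarrow> inv_monoid S \<and>
     (\<forall>a\<in>fcar S. fmx S a \<in> fcar S \<and> fsigma S a (fmx S a) \<and>
        (\<forall>b\<in>fcar S. fsigma S a b \<longrightarrow> nle S b (fmx S a)))"

definition fhom :: "('m \<Rightarrow> 'n) \<Rightarrow> ('m, 'z) fsig_scheme \<Rightarrow> ('n, 'y) fsig_scheme \<Rightarrow> bool" where
  "fhom \<phi> S T \<longleftrightarrow>
     (\<forall>a\<in>fcar S. \<forall>b\<in>fcar S. \<phi> (fmul S a b) = fmul T (\<phi> a) (\<phi> b)) \<and>
     \<phi> (fone S) = fone T \<and>
     (\<forall>a\<in>fcar S. \<phi> (finv S a) = finv T (\<phi> a)) \<and>
     (\<forall>a\<in>fcar S. \<phi> (fmx S a) = fmx T (\<phi> a))"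

section \<open>Words over X \<union> X^{-1}; (x,True) is x, (x,False) is x^{-1}\<close>

type_synonym 'a word = "('a \<times> bool) list"

definition wds :: "'a set \<Rightarrow> 'a word set" where
  "wds X = {w. fst ` set w \<subseteq> X}"

definition winv :: "'a word \<Rightarrow> 'a word" where
  "winv w = rev (map (\<lambda>(x, b). (x, \<not> b)) w)"

definition red :: "'a word \<Rightarrow> 'a word" where
  "red w = foldr (\<lambda>a acc. case acc of [] \<Rightarrow> [a]
      | b # r \<Rightarrow> (if fst a = fst b \<and> snd a \<noteq> snd b then r else a # acc)) w []"

inductive_set vagner :: "('a word \<times> 'a word) set" where
  v_refl: "(w, w) \<in> vagner"
| v_sym: "(u, v) \<in> vagner \<Longrightarrow> (v, u) \<in> vagner"
| v_trans: "(u, v) \<in> vagner \<Longrightarrow> (v, w) \<in> vagner \<Longrightarrow> (u, w) \<in> vagner"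
| v_cong: "(u, v) \<in> vagner \<Longrightarrow> (p @ u @ q, p @ v @ q) \<in> vagner"
| v_ax1: "(w @ winv w @ w, w) \<in> vagner"
| v_ax2: "(w @ winv w @ v @ winv v, v @ winv v @ w @ winv w) \<in> vagner"

definition vag :: "'a set \<Rightarrow> ('a word \<times> 'a word) set" where
  "vag X = vagner \<inter> (wds X \<times> wds X)"

definition FIM0 :: "'a set \<Rightarrow> 'a word set fsig" where
  "FIM0 X = \<lparr> fcar = wds X // vag X,
     fmul = (\<lambda>A B. vag X `` {(SOME a. a \<in> A) @ (SOME b. b \<in> B)}),
     fone = vag X `` {[]},
     finv = (\<lambda>A. vag X `` {winv (SOME a. a \<in> A)}),
     fmx = (\<lambda>A. undefined) \<rparr>"

definition FIM :: "'a set \<Rightarrow> 'a word set fsig" where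
  "FIM X = (FIM0 X) \<lparr> fmx := (\<lambda>A. THE B. B \<in> fcar (FIM0 X) \<and> fsigma (FIM0 X) A B \<and>
       (\<forall>C\<in>fcar (FIM0 X). fsigma (FIM0 X) A C \<longrightarrow> nle (FIM0 X) C B)) \<rparr>"

datatype 'a ftm = Gen 'a | Tone | Tmul "'a ftm" "'a ftm" | Tinv "'a ftm" | Tm "'a ftm"

fun gens :: "'a ftm \<Rightarrow> 'a set" where
  "gens (Gen x) = {x}"
| "gens Tone = {}"
| "gens (Tmul s t) = gens s \<union> gens t"
| "gens (Tinv t) = gens t"
| "gens (Tm t) = gens t"

definition tms :: "'a set \<Rightarrow> 'a ftm set" where
  "tms X = {t. gens t \<subseteq> X}"

fun word_tm :: "'a word \<Rightarrow> 'a ftm" where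
  "word_tm [] = Tone"
| "word_tm ((x, b) # w) = Tmul (if b then Gen x else Tinv (Gen x)) (word_tm w)"

definition fcong :: "'a ftm set \<Rightarrow> ('a ftm \<times> 'a ftm) set \<Rightarrow> bool" where
  "fcong T \<theta> \<longleftrightarrow> equiv T \<theta> \<and>
     (\<forall>a b c d. (a, b) \<in> \<theta> \<longrightarrow> (c, d) \<in> \<theta> \<longrightarrow> (Tmul a c, Tmul b d) \<in> \<theta>) \<and>
     (\<forall>a b. (a, b) \<in> \<theta> \<longrightarrow> (Tinv a, Tinv b) \<in> \<theta>) \<and>
     (\<forall>a b. (a, b) \<in> \<theta> \<longrightarrow> (Tm a, Tm b) \<in> \<theta>)"

definition quot :: "('a ftm \<times> 'a ftm) set \<Rightarrow> 'a ftm set \<Rightarrow> 'a ftm set fsig" where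
  "quot \<theta> T = \<lparr> fcar = T // \<theta>,
     fmul = (\<lambda>A B. \<theta> `` {Tmul (SOME a. a \<in> A) (SOME b. b \<in> B)}),
     fone = \<theta> `` {Tone},
     finv = (\<lambda>A. \<theta> `` {Tinv (SOME a. a \<in> A)}),
     fmx = (\<lambda>A. \<theta> `` {Tm (SOME a. a \<in> A)}) \<rparr>"

text \<open>The congruence on the term algebra whose quotient is FInv<X | R>: the least congruence
  containing R whose quotient is an F-inverse monoid. (The congruence giving the free
  F-inverse monoid is the case R = {}; this is the congruence generated by R on it.)\<close>
definition pres_cong :: "'a set \<Rightarrow> ('a ftm \<times> 'a ftm) set \<Rightarrow> ('a ftm \<times> 'a ftm) set" where
  "pres_cong X R = \<Inter> {\<theta>. fcong (tms X) \<theta> \<and> R \<subseteq> \<theta> \<and> F_inverse (quot \<theta> (tms X))}"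

definition FInv :: "'a set \<Rightarrow> ('a ftm \<times> 'a ftm) set \<Rightarrow> 'a ftm set fsig" where
  "FInv X R = quot (pres_cong X R) (tms X)"

definition red_rel :: "'a set \<Rightarrow> ('a ftm \<times> 'a ftm) set" where
  "red_rel X = {(word_tm (red w), Tm (word_tm w)) | w. w \<in> wds X}"

end

theory Submission
  imports Defs
begin


abbreviation veq (infix "\<approx>" 50) where "u \<approx> v \<equiv> (u, v) \<in> vagner"

declare v_trans[trans]

definition ilet :: "'a \<times> bool \<Rightarrow> 'a \<times> bool" where "ilet a = (fst a, \<not> snd a)"

lemma winv_Nil[simp]: "winv [] = []" by (simp add: winv_def)
lemma winv_Cons[simp]: "winv (a # w) = winv w @ [ilet a]"
  by (cases a) (simp add: winv_def ilet_def)
lemma winv_append[simp]: "winv (u @ v) = winv v @ winv u" by (simp add: winv_def)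
lemma ilet_ilet[simp]: "ilet (ilet a) = a" by (simp add: ilet_def)
lemma winv_winv[simp]: "winv (winv w) = w" by (induction w) auto
lemma winv_single: "winv [a] = [ilet a]" by simp

lemma vc: "u \<approx> v \<Longrightarrow> p @ u @ q \<approx> p @ v @ q" by (rule v_cong)
lemma vcl: "u \<approx> v \<Longrightarrow> p @ u \<approx> p @ v" using v_cong[of u v p "[]"] by simp
lemma vcr: "u \<approx> v \<Longrightarrow> u @ q \<approx> v @ q" using v_cong[of u v "[]" q] by simp

lemma v_winv: "u \<approx> v \<Longrightarrow> winv u \<approx> winv v"
proof (induction rule: vagner.induct)
  case (v_cong u v p q) then show ?case using vc[of "winv u" "winv v" "winv q" "winv p"] by simp
next
  case (v_ax1 w) then show ?case using vagner.v_ax1[of "winv w"] by simp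
next
  case (v_ax2 w v) then show ?case using vagner.v_ax2[of v w] by simp
qed (auto intro: vagner.intros)

definition rstep :: "'a \<times> bool \<Rightarrow> 'a word \<Rightarrow> 'a word" where
  "rstep = (\<lambda>a acc. case acc of [] \<Rightarrow> [a]
      | b # r \<Rightarrow> (if fst a = fst b \<and> snd a \<noteq> snd b then r else a # acc))"

lemma red_foldr: "red w = foldr rstep w []" by (simp add: red_def rstep_def)

fun rd :: "'a word \<Rightarrow> bool" where
  "rd (a # b # r) = (\<not>(fst a = fst b \<and> snd a \<noteq> snd b) \<and> rd (b # r))"
| "rd _ = True"

lemma rd_tl: "rd (b # r) \<Longrightarrow> rd r" by (cases r) auto

lemma rd_rstep: "rd r \<Longrightarrow> rd (rstep a r)"
  by (cases r) (auto simp: rstep_def dest: rd_tl)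

lemma rd_foldr: "rd r \<Longrightarrow> rd (foldr rstep u r)"
  by (induction u) (auto intro: rd_rstep)

lemma rstep_ilet: "rd r \<Longrightarrow> rstep a (rstep (ilet a) r) = r"
proof (cases r)
  case Nil then show ?thesis by (simp add: rstep_def ilet_def)
next
  case (Cons b r')
  assume "rd r"
  show ?thesis
  proof (cases "fst (ilet a) = fst b \<and> snd (ilet a) \<noteq> snd b")
    case True
    then have ab: "b = a" by (cases a; cases b) (auto simp: ilet_def)
    show ?thesis
    proof (cases r')
      case Nil then show ?thesis using Cons True ab by (simp add: rstep_def)
    next
      case (Cons c r'')
      then show ?thesis using \<open>rd r\<close> \<open>r = b # r'\<close> True ab by (simp add: rstep_def)
    qed
  next
    case False
    then have "rstep (ilet a) r = ilet a # r" using Cons by (simp add: rstep_def)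
    moreover have "rstep a (ilet a # r) = r" by (simp add: rstep_def ilet_def)
    ultimately show ?thesis by simp
  qed
qed

lemma foldr_u_winv: "rd r \<Longrightarrow> foldr rstep (u @ winv u) r = r"
proof (induction u arbitrary: r)
  case Nil then show ?case by simp
next
  case (Cons a u)
  have "foldr rstep ((a # u) @ winv (a # u)) r = rstep a (foldr rstep (u @ winv u) (rstep (ilet a) r))"
    by simp
  also have "\<dots> = rstep a (rstep (ilet a) r)" using Cons rd_rstep by metis
  also have "\<dots> = r" using Cons rstep_ilet by blast
  finally show ?case .
qed

lemma foldr_winv_u: "rd r \<Longrightarrow> foldr rstep (winv u @ u) r = r"
  using foldr_u_winv[of r "winv u"] by simp

lemma foldr_u_winv': "rd r \<Longrightarrow> foldr rstep u (foldr rstep (winv u) r) = r"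
  using foldr_u_winv[of r u] by simp
lemma foldr_winv_u': "rd r \<Longrightarrow> foldr rstep (winv u) (foldr rstep u r) = r"
  using foldr_winv_u[of r u] by simp

lemma v_foldr: "u \<approx> v \<Longrightarrow> \<forall>r. rd r \<longrightarrow> foldr rstep u r = foldr rstep v r"
proof (induction rule: vagner.induct)
  case (v_cong u v p q) then show ?case by (simp add: rd_foldr)
next
  case (v_ax1 w)
  show ?case
  proof (intro allI impI)
    fix r :: "'a word" assume "rd r"
    have "foldr rstep (w @ winv w @ w) r = foldr rstep w (foldr rstep (winv w @ w) r)" by simp
    then show "foldr rstep (w @ winv w @ w) r = foldr rstep w r" using foldr_winv_u[OF \<open>rd r\<close>] by simp
  qed
next
  case (v_ax2 w v)
  show ?case
  proof (intro allI impI)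
    fix r :: "'a word" assume "rd r"
    have a: "foldr rstep (w @ winv w @ v @ winv v) r = foldr rstep (w @ winv w) (foldr rstep (v @ winv v) r)" by simp
    have b: "foldr rstep (v @ winv v @ w @ winv w) r = foldr rstep (v @ winv v) (foldr rstep (w @ winv w) r)" by simp
    show "foldr rstep (w @ winv w @ v @ winv v) r = foldr rstep (v @ winv v @ w @ winv w) r"
      unfolding a b using foldr_u_winv'[OF \<open>rd r\<close>, of v] foldr_u_winv'[OF \<open>rd r\<close>, of w] by simp
  qed
qed auto

lemma v_red: "u \<approx> v \<Longrightarrow> red u = red v"
  using v_foldr[of u v] by (simp add: red_foldr)

lemma red_append: "red (u @ v) = foldr rstep u (red v)" by (simp add: red_foldr)

lemma rd_red: "rd (red w)" by (simp add: red_foldr rd_foldr)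

lemma red_Cons: "red (a # w) = rstep a (red w)" by (simp add: red_foldr)

lemma v_le_red: "w \<approx> w @ winv w @ red w"
proof (induction w)
  case Nil then show ?case by (simp add: red_foldr v_refl)
next
  case (Cons a w)
  show ?case
  proof (cases "\<exists>r'. red w = ilet a # r'")
    case True
    then obtain r' where r: "red w = ilet a # r'" by blast
    have "rstep a (red w) = r'" using r by (simp add: rstep_def ilet_def)
    then have "(a # w) @ winv (a # w) @ red (a # w) = [a] @ (w @ winv w @ red w)"
      using r by (simp add: red_Cons)
    moreover have "[a] @ w \<approx> [a] @ (w @ winv w @ red w)" using vcl[OF Cons] .
    ultimately show ?thesis by simp
  next
    case False
    then have rs: "rstep a (red w) = a # red w"
      by (cases "red w") (auto simp: rstep_def ilet_def prod_eq_iff)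
    have "a # w \<approx> [a] @ (w @ winv w @ red w)" using vcl[OF Cons, of "[a]"] by simp
    also have "[a] @ (w @ winv w @ red w) \<approx> ([a] @ winv [a] @ [a]) @ (w @ winv w @ red w)"
      using vcr[OF v_sym[OF v_ax1[of "[a]"]]] by simp
    also have "([a] @ winv [a] @ [a]) @ (w @ winv w @ red w) = [a] @ ([ilet a] @ winv [ilet a]) @ (w @ winv w) @ red w"
      by simp
    also have "[a] @ ([ilet a] @ winv [ilet a]) @ (w @ winv w) @ red w \<approx> [a] @ (w @ winv w) @ ([ilet a] @ winv [ilet a]) @ red w"
      using vc[OF v_ax2[of "[ilet a]" w], of "[a]" "red w"] by simp
    also have "[a] @ (w @ winv w) @ ([ilet a] @ winv [ilet a]) @ red w = (a # w) @ winv (a # w) @ red (a # w)" using rs by (simp add: red_Cons)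
    finally show ?thesis .
  qed
qed


lemma vsym: "u \<approx> v \<Longrightarrow> v \<approx> u" by (rule v_sym)

lemma ax1': "w @ winv w @ w \<approx> w" by (rule v_ax1)
lemma ax1i: "winv w @ w @ winv w \<approx> winv w" using v_ax1[of "winv w"] by simp

lemma proj_idem: "(w @ winv w) @ (w @ winv w) \<approx> w @ winv w"
  using vcr[OF v_ax1[of w], of "winv w"] by simp

lemma proj_idem': "(winv w @ w) @ (winv w @ w) \<approx> winv w @ w"
  using proj_idem[of "winv w"] by simp

lemma idem_winv: assumes "y @ y \<approx> y" shows "y \<approx> winv y"
proof -
  have "winv y \<approx> winv y @ y @ winv y" using vsym[OF ax1i[of y]] .
  also have "winv y @ y @ winv y \<approx> winv y @ (y @ y) @ winv y" using vc[OF vsym[OF assms]] .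
  also have "winv y @ (y @ y) @ winv y = (winv y @ winv (winv y)) @ (y @ winv y)" by simp
  also have "(winv y @ winv (winv y)) @ (y @ winv y) \<approx> (y @ winv y) @ (winv y @ winv (winv y))"
    using v_ax2[of "winv y" y] by simp
  also have "(y @ winv y) @ (winv y @ winv (winv y)) = y @ winv (y @ y) @ y" by simp
  also have "y @ winv (y @ y) @ y \<approx> y @ winv y @ y" using vc[OF v_winv[OF assms]] .
  also have "y @ winv y @ y \<approx> y" by (rule v_ax1)
  finally show ?thesis by (rule vsym)
qed

lemma idem_proj: assumes "y @ y \<approx> y" shows "y \<approx> y @ winv y"
  using vsym[OF assms] vcl[OF idem_winv[OF assms], of y] v_trans by blast

lemma idem_comm: assumes "y @ y \<approx> y" "z @ z \<approx> z" shows "y @ z \<approx> z @ y"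
proof -
  have "y @ z \<approx> (y @ winv y) @ z" using vcr[OF idem_proj[OF assms(1)]] .
  also have "(y @ winv y) @ z \<approx> (y @ winv y) @ (z @ winv z)" using vcl[OF idem_proj[OF assms(2)]] .
  also have "(y @ winv y) @ (z @ winv z) \<approx> (z @ winv z) @ (y @ winv y)" using v_ax2[of y z] by simp
  also have "(z @ winv z) @ (y @ winv y) \<approx> z @ (y @ winv y)" using vcr[OF vsym[OF idem_proj[OF assms(2)]]] .
  also have "z @ (y @ winv y) \<approx> z @ y" using vcl[OF vsym[OF idem_proj[OF assms(1)]]] .
  finally show ?thesis .
qed

lemma v_uniq: assumes a: "u @ v @ u \<approx> u" and b: "v @ u @ v \<approx> v" shows "v \<approx> winv u"
proof -
  have i1: "(v @ u) @ (v @ u) \<approx> v @ u" using vcr[OF b, of u] by simp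
  have i2: "(u @ v) @ (u @ v) \<approx> u @ v" using vcr[OF a, of v] by simp
  have i3: "(winv u @ u) @ (winv u @ u) \<approx> winv u @ u" by (rule proj_idem')
  have i4: "(u @ winv u) @ (u @ winv u) \<approx> u @ winv u" by (rule proj_idem)
  have "v \<approx> v @ u @ v" using vsym[OF b] .
  also have "v @ u @ v \<approx> v @ (u @ winv u @ u) @ v" using vc[OF vsym[OF ax1'[of u]]] .
  also have "v @ (u @ winv u @ u) @ v = ((v @ u) @ (winv u @ u)) @ v" by simp
  also have "((v @ u) @ (winv u @ u)) @ v \<approx> ((winv u @ u) @ (v @ u)) @ v"
    using vcr[OF idem_comm[OF i1 i3]] .
  also have "((winv u @ u) @ (v @ u)) @ v = winv u @ (u @ v @ u) @ v" by simp
  also have "winv u @ (u @ v @ u) @ v \<approx> winv u @ u @ v" using vc[OF a] by simp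
  finally have v1: "v \<approx> winv u @ u @ v" .
  have "winv u \<approx> winv u @ u @ winv u" using vsym[OF ax1i[of u]] .
  also have "winv u @ u @ winv u \<approx> winv u @ (u @ v @ u) @ winv u" using vc[OF vsym[OF a]] .
  also have "winv u @ (u @ v @ u) @ winv u = winv u @ ((u @ v) @ (u @ winv u))" by simp
  also have "winv u @ ((u @ v) @ (u @ winv u)) \<approx> winv u @ ((u @ winv u) @ (u @ v))"
    using vcl[OF idem_comm[OF i2 i4]] .
  also have "winv u @ ((u @ winv u) @ (u @ v)) = (winv u @ u @ winv u) @ u @ v" by simp
  also have "(winv u @ u @ winv u) @ u @ v \<approx> winv u @ u @ v" using vcr[OF ax1i[of u]] by simp
  finally have v2: "winv u \<approx> winv u @ u @ v" .
  show ?thesis using v1 vsym[OF v2] v_trans by blast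
qed

lemma v_antisym: assumes "y @ y \<approx> y" "y' @ y' \<approx> y'" "z \<approx> y @ v" "v \<approx> y' @ z" shows "z \<approx> v"
proof -
  have "y @ z \<approx> y @ y @ v" using vcl[OF assms(3)] .
  also have "y @ y @ v \<approx> y @ v" using vcr[OF assms(1)] by simp
  also have "y @ v \<approx> z" using vsym[OF assms(3)] .
  finally have yz: "y @ z \<approx> z" .
  have "v \<approx> y' @ z" by fact
  also have "y' @ z \<approx> y' @ y @ z" using vcl[OF vsym[OF yz]] .
  also have "y' @ y @ z \<approx> y @ y' @ z" using vcr[OF idem_comm[OF assms(2) assms(1)]] by simp
  also have "y @ y' @ z \<approx> y @ v" using vcl[OF vsym[OF assms(4)]] .
  also have "y @ v \<approx> z" using vsym[OF assms(3)] .
  finally show ?thesis by (rule vsym)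
qed

lemma idem_red: assumes "y @ y \<approx> y" shows "red (y @ v) = red v"
proof -
  have "y @ v \<approx> (y @ winv y) @ v" using vcr[OF idem_proj[OF assms]] .
  then have "red (y @ v) = red ((y @ winv y) @ v)" by (rule v_red)
  also have "\<dots> = foldr rstep y (foldr rstep (winv y) (red v))" by (simp add: red_append)
  also have "\<dots> = red v" by (rule foldr_u_winv'[OF rd_red])
  finally show ?thesis .
qed

lemma wds_Nil[simp]: "[] \<in> wds X" by (simp add: wds_def)
lemma wds_Cons[simp]: "a # w \<in> wds X \<longleftrightarrow> fst a \<in> X \<and> w \<in> wds X" by (simp add: wds_def)
lemma wds_append[simp]: "u @ v \<in> wds X \<longleftrightarrow> u \<in> wds X \<and> v \<in> wds X" by (auto simp: wds_def)
lemma wds_winv[simp]: "winv w \<in> wds X \<longleftrightarrow> w \<in> wds X" by (induction w) (auto simp: ilet_def)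

lemma set_foldr_rstep: "set (foldr rstep u r) \<subseteq> set u \<union> set r"
proof (induction u)
  case (Cons a u) then show ?case
    by (cases "foldr rstep u r") (auto simp: rstep_def split: if_splits)
qed simp

lemma wds_red[simp]: "w \<in> wds X \<Longrightarrow> red w \<in> wds X"
  using set_foldr_rstep[of w "[]"] by (auto simp: wds_def red_foldr)



locale wstruct =
  fixes S :: "('m, 'z) fsig_scheme" and q :: "'a word \<Rightarrow> 'm" and X :: "'a set"
  assumes car: "fcar S = q ` wds X"
    and mul: "\<And>u v. u \<in> wds X \<Longrightarrow> v \<in> wds X \<Longrightarrow> fmul S (q u) (q v) = q (u @ v)"
    and one: "fone S = q []"
    and inv: "\<And>u. u \<in> wds X \<Longrightarrow> finv S (q u) = q (winv u)"
    and eq: "\<And>u v. u \<in> wds X \<Longrightarrow> v \<in> wds X \<Longrightarrow> q u = q v \<longleftrightarrow> u \<approx> v"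
begin

lemma carE: assumes "a \<in> fcar S" obtains u where "u \<in> wds X" "a = q u"
  using assms car by blast

lemma qC[simp]: "u \<in> wds X \<Longrightarrow> q u \<in> fcar S" using car by blast

lemma inv_monoid: "inv_monoid S"
proof -
  have c1: "fone S \<in> fcar S" by (simp add: one)
  have c2: "\<forall>a\<in>fcar S. \<forall>b\<in>fcar S. fmul S a b \<in> fcar S"
    by (auto elim!: carE simp: mul)
  have c3: "\<forall>a\<in>fcar S. \<forall>b\<in>fcar S. \<forall>c\<in>fcar S. fmul S (fmul S a b) c = fmul S a (fmul S b c)"
    by (auto elim!: carE simp: mul)
  have c4: "\<forall>a\<in>fcar S. fmul S (fone S) a = a \<and> fmul S a (fone S) = a"
    by (auto elim!: carE simp: mul one)
  have c5: "\<forall>a\<in>fcar S. finv S a \<in> fcar S \<and>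
        fmul S (fmul S a (finv S a)) a = a \<and> fmul S (fmul S (finv S a) a) (finv S a) = finv S a"
  proof (intro ballI conjI)
    fix a assume "a \<in> fcar S"
    then obtain u where u: "u \<in> wds X" "a = q u" by (rule carE)
    show "finv S a \<in> fcar S" using u by (simp add: inv)
    show "fmul S (fmul S a (finv S a)) a = a" using u ax1'[of u]
      by (simp add: inv mul eq)
    show "fmul S (fmul S (finv S a) a) (finv S a) = finv S a" using u ax1i[of u]
      by (simp add: inv mul eq)
  qed
  have c6: "\<forall>a\<in>fcar S. \<forall>b\<in>fcar S. fmul S (fmul S a b) a = a \<and> fmul S (fmul S b a) b = b \<longrightarrow> b = finv S a"
  proof (intro ballI impI)
    fix a b assume "a \<in> fcar S" "b \<in> fcar S" and h: "fmul S (fmul S a b) a = a \<and> fmul S (fmul S b a) b = b"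
    then obtain u v where u: "u \<in> wds X" "a = q u" "v \<in> wds X" "b = q v" by (meson carE)
    have "u @ v @ u \<approx> u" "v @ u @ v \<approx> v" using h u by (simp_all add: mul eq)
    then have "v \<approx> winv u" by (rule v_uniq)
    then show "b = finv S a" using u by (simp add: inv eq)
  qed
  show ?thesis unfolding inv_monoid_def using c1 c2 c3 c4 c5 c6 by blast
qed

lemma nle_q: assumes "u \<in> wds X" "v \<in> wds X"
  shows "nle S (q u) (q v) \<longleftrightarrow> (\<exists>y\<in>wds X. y @ y \<approx> y \<and> u \<approx> y @ v)"
proof
  assume "nle S (q u) (q v)"
  then obtain e where e: "e \<in> fcar S" "fmul S e e = e" "q u = fmul S e (q v)" by (auto simp: nle_def)
  then obtain y where y: "y \<in> wds X" "e = q y" by (meson carE)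
  show "\<exists>y\<in>wds X. y @ y \<approx> y \<and> u \<approx> y @ v" using e y assms by (auto simp: mul eq)
next
  assume "\<exists>y\<in>wds X. y @ y \<approx> y \<and> u \<approx> y @ v"
  then obtain y where y: "y \<in> wds X" "y @ y \<approx> y" "u \<approx> y @ v" by blast
  show "nle S (q u) (q v)" unfolding nle_def
    by (rule bexI[of _ "q y"]) (use y assms in \<open>auto simp: mul eq\<close>)
qed

lemma le_red: "u \<in> wds X \<Longrightarrow> nle S (q u) (q (red u))"
  using proj_idem[of u] v_le_red[of u] by (subst nle_q) (auto intro!: bexI[of _ "u @ winv u"])

lemma sig1: "u \<in> wds X \<Longrightarrow> fsigma S (q u) (q (red u))"
  unfolding fsigma_def
proof (rule bexI[of _ "q u"])
  assume u: "u \<in> wds X"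
  have "nle S (q u) (q u)"
    using u v_refl[of u] v_refl[of "[]::'a word"] by (subst nle_q) (auto intro!: bexI[of _ "[]"])
  then show "nle S (q u) (q u) \<and> nle S (q u) (q (red u))" using le_red[OF u] by blast
qed simp

lemma nle_red: assumes "z \<in> wds X" "u \<in> wds X" "nle S (q z) (q u)" shows "red z = red u"
proof -
  obtain y where "y @ y \<approx> y" "z \<approx> y @ u" using assms nle_q by blast
  then show ?thesis using v_red idem_red by metis
qed

lemma sig2: assumes "u \<in> wds X" "b \<in> fcar S" "fsigma S (q u) b" shows "nle S b (q (red u))"
proof -
  obtain v where v: "v \<in> wds X" "b = q v" using assms(2) by (rule carE)
  obtain c where "c \<in> fcar S" "nle S c (q u)" "nle S c b" using assms(3) by (auto simp: fsigma_def)
  then obtain z where "z \<in> wds X" "nle S (q z) (q u)" "nle S (q z) (q v)" using v by (metis carE)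
  then have "red v = red u" using nle_red assms(1) v by metis
  then show ?thesis using le_red[OF v(1)] v by simp
qed

lemma antisym: assumes "a \<in> fcar S" "b \<in> fcar S" "nle S a b" "nle S b a" shows "a = b"
proof -
  obtain u v where u: "u \<in> wds X" "a = q u" "v \<in> wds X" "b = q v" using assms by (meson carE)
  obtain y y' where "y @ y \<approx> y" "u \<approx> y @ v" "y' @ y' \<approx> y'" "v \<approx> y' @ u"
    using assms u nle_q by metis
  then have "u \<approx> v" using v_antisym by blast
  then show ?thesis using u eq by simp
qed

lemma greatest: assumes "u \<in> wds X"
  shows "(THE B. B \<in> fcar S \<and> fsigma S (q u) B \<and> (\<forall>C\<in>fcar S. fsigma S (q u) C \<longrightarrow> nle S C B)) = q (red u)"
proof (rule the_equality)
  show "q (red u) \<in> fcar S \<and> fsigma S (q u) (q (red u)) \<and> (\<forall>C\<in>fcar S. fsigma S (q u) C \<longrightarrow> nle S C (q (red u)))"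
    using assms sig1 sig2 by simp
next
  fix B assume B: "B \<in> fcar S \<and> fsigma S (q u) B \<and> (\<forall>C\<in>fcar S. fsigma S (q u) C \<longrightarrow> nle S C B)"
  then have "nle S (q (red u)) B" using sig1 assms by simp
  moreover have "nle S B (q (red u))" using sig2 assms B by blast
  ultimately show "B = q (red u)" using antisym B assms by simp
qed

end



locale invm =
  fixes S :: "('m, 'z) fsig_scheme"
  assumes im: "inv_monoid S"
begin

abbreviation mm (infixl "\<odot>" 70) where "a \<odot> b \<equiv> fmul S a b"
abbreviation C where "C \<equiv> fcar S"
abbreviation iv where "iv a \<equiv> finv S a"

lemma one_C[simp]: "fone S \<in> C" using im by (simp add: inv_monoid_def)
lemma cl[simp]: "a \<in> C \<Longrightarrow> b \<in> C \<Longrightarrow> a \<odot> b \<in> C" using im by (simp add: inv_monoid_def)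
lemma as: "a \<in> C \<Longrightarrow> b \<in> C \<Longrightarrow> c \<in> C \<Longrightarrow> (a \<odot> b) \<odot> c = a \<odot> (b \<odot> c)"
  using im by (simp add: inv_monoid_def)
lemma lid[simp]: "a \<in> C \<Longrightarrow> fone S \<odot> a = a" using im by (simp add: inv_monoid_def)
lemma rid[simp]: "a \<in> C \<Longrightarrow> a \<odot> fone S = a" using im by (simp add: inv_monoid_def)
lemma ivC[simp]: "a \<in> C \<Longrightarrow> iv a \<in> C" using im by (simp add: inv_monoid_def)
lemma inv1: "a \<in> C \<Longrightarrow> a \<odot> iv a \<odot> a = a" using im unfolding inv_monoid_def by blast
lemma inv2: "a \<in> C \<Longrightarrow> iv a \<odot> a \<odot> iv a = iv a" using im unfolding inv_monoid_def by blast
lemma uniq: "a \<in> C \<Longrightarrow> b \<in> C \<Longrightarrow> a \<odot> b \<odot> a = a \<Longrightarrow> b \<odot> a \<odot> b = b \<Longrightarrow> b = iv a"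
  using im unfolding inv_monoid_def by blast

lemma inv1x: assumes "a \<in> C" "x \<in> C" shows "a \<odot> (iv a \<odot> (a \<odot> x)) = a \<odot> x"
proof -
  have "(a \<odot> iv a \<odot> a) \<odot> x = a \<odot> (iv a \<odot> (a \<odot> x))" using assms by (simp add: as)
  then show ?thesis using inv1[OF assms(1)] by simp
qed
lemma inv2x: assumes "a \<in> C" "x \<in> C" shows "iv a \<odot> (a \<odot> (iv a \<odot> x)) = iv a \<odot> x"
proof -
  have "(iv a \<odot> a \<odot> iv a) \<odot> x = iv a \<odot> (a \<odot> (iv a \<odot> x))" using assms by (simp add: as)
  then show ?thesis using inv2[OF assms(1)] by simp
qed

lemma idem_self_inv: assumes "a \<in> C" "a \<odot> a = a" shows "iv a = a"
  using uniq[OF assms(1) assms(1)] assms by simp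

lemma idem_prod: assumes e: "e \<in> C" "e \<odot> e = e" and f: "f \<in> C" "f \<odot> f = f"
  shows "(e \<odot> f) \<odot> (e \<odot> f) = e \<odot> f"
proof -
  define a where "a = e \<odot> f"
  define a' where "a' = iv a"
  have aC: "a \<in> C" "a' \<in> C" using e f by (simp_all add: a_def a'_def)
  define b where "b = f \<odot> a' \<odot> e"
  have bC: "b \<in> C" using aC e f by (simp add: b_def)
  have ff: "f \<odot> (f \<odot> x) = f \<odot> x" if "x \<in> C" for x using f that by (simp add: as[symmetric])
  have ee: "e \<odot> (e \<odot> x) = e \<odot> x" if "x \<in> C" for x using e that by (simp add: as[symmetric])
  have "a \<odot> b \<odot> a = e \<odot> (f \<odot> (f \<odot> (a' \<odot> (e \<odot> (e \<odot> f)))))"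
    using aC e f by (simp add: a_def b_def as)
  also have "\<dots> = e \<odot> (f \<odot> (a' \<odot> (e \<odot> f)))" using aC e f by (simp add: ff ee)
  also have "\<dots> = a \<odot> a' \<odot> a" using aC e f by (simp add: a_def as)
  also have "\<dots> = a" using inv1[OF aC(1)] by (simp add: a'_def)
  finally have h1: "a \<odot> b \<odot> a = a" .
  have "b \<odot> a \<odot> b = f \<odot> (a' \<odot> (e \<odot> (e \<odot> (f \<odot> (f \<odot> (a' \<odot> e))))))"
    using aC e f by (simp add: a_def b_def as)
  also have "\<dots> = f \<odot> (a' \<odot> (e \<odot> (f \<odot> (a' \<odot> e))))" using aC e f by (simp add: ff ee)
  also have "\<dots> = f \<odot> ((a' \<odot> a \<odot> a') \<odot> e)" using aC e f by (simp add: a_def as)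
  also have "\<dots> = b" using inv2[OF aC(1)] by (simp add: a'_def b_def as aC e f)
  finally have h2: "b \<odot> a \<odot> b = b" .
  have ba: "b = a'" using uniq[OF aC(1) bC h1 h2] by (simp add: a'_def)
  have "a' \<odot> a' = b \<odot> b" using ba by simp
  also have "\<dots> = f \<odot> (a' \<odot> (e \<odot> (f \<odot> (a' \<odot> e))))" using aC e f by (simp add: b_def as)
  also have "\<dots> = f \<odot> ((a' \<odot> a \<odot> a') \<odot> e)" using aC e f by (simp add: a_def as)
  also have "\<dots> = b" using inv2[OF aC(1)] by (simp add: a'_def b_def as aC e f)
  also have "\<dots> = a'" by (rule ba)
  finally have a'i: "a' \<odot> a' = a'" .
  have "a = iv a'" using uniq[OF aC(2) aC(1)] inv1[OF aC(1)] inv2[OF aC(1)] by (simp add: a'_def)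
  moreover have "a' = iv a'" using idem_self_inv[OF aC(2) a'i] by simp
  ultimately have "a = a'" by simp
  then show ?thesis using a'i by (simp add: a_def)
qed

lemma idem_comm: assumes e: "e \<in> C" "e \<odot> e = e" and f: "f \<in> C" "f \<odot> f = f"
  shows "e \<odot> f = f \<odot> e"
proof -
  have i1: "(e \<odot> f) \<odot> (e \<odot> f) = e \<odot> f" by (rule idem_prod[OF e f])
  have i2: "(f \<odot> e) \<odot> (f \<odot> e) = f \<odot> e" by (rule idem_prod[OF f e])
  have ff: "f \<odot> (f \<odot> x) = f \<odot> x" if "x \<in> C" for x using f that by (simp add: as[symmetric])
  have ee: "e \<odot> (e \<odot> x) = e \<odot> x" if "x \<in> C" for x using e that by (simp add: as[symmetric])
  have i1': "e \<odot> (f \<odot> (e \<odot> f)) = e \<odot> f" using i1 e f by (simp add: as)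
  have i2': "f \<odot> (e \<odot> (f \<odot> e)) = f \<odot> e" using i2 e f by (simp add: as)
  have "(e \<odot> f) \<odot> (f \<odot> e) \<odot> (e \<odot> f) = e \<odot> f"
    using e f by (simp add: as ff ee i1')
  moreover have "(f \<odot> e) \<odot> (e \<odot> f) \<odot> (f \<odot> e) = f \<odot> e"
    using e f by (simp add: as ff ee i2')
  ultimately have "f \<odot> e = iv (e \<odot> f)" using uniq e f by simp
  moreover have "e \<odot> f = iv (e \<odot> f)" using idem_self_inv i1 e f by simp
  ultimately show ?thesis by simp
qed

lemma proj_id: "a \<in> C \<Longrightarrow> (a \<odot> iv a) \<odot> (a \<odot> iv a) = a \<odot> iv a"
  using inv1[of a] by (simp add: as[symmetric])

lemma inv_inv: "a \<in> C \<Longrightarrow> iv (iv a) = a"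
  using uniq[of "iv a" a] inv1[of a] inv2[of a] by simp

lemma inv_mul: assumes "a \<in> C" "b \<in> C" shows "iv (a \<odot> b) = iv b \<odot> iv a"
proof -
  have c1: "(b \<odot> iv b) \<odot> (iv a \<odot> a) = (iv a \<odot> a) \<odot> (b \<odot> iv b)"
    using idem_comm[OF _ proj_id[of b] _ proj_id[of "iv a"]] assms
    by (simp add: inv_inv)
  have c1': "b \<odot> (iv b \<odot> (iv a \<odot> (a \<odot> x))) = iv a \<odot> (a \<odot> (b \<odot> (iv b \<odot> x)))" if "x \<in> C" for x
  proof -
    have "b \<odot> (iv b \<odot> (iv a \<odot> (a \<odot> x))) = ((b \<odot> iv b) \<odot> (iv a \<odot> a)) \<odot> x" using assms that by (simp add: as)
    also have "\<dots> = ((iv a \<odot> a) \<odot> (b \<odot> iv b)) \<odot> x" using c1 by simp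
    finally show ?thesis using assms that by (simp add: as)
  qed
  have i1: "a \<odot> (iv a \<odot> (a \<odot> x)) = a \<odot> x" if "x \<in> C" for x
    using inv1x[of a] assms that by simp
  have i1b: "b \<odot> (iv b \<odot> (b \<odot> x)) = b \<odot> x" if "x \<in> C" for x
    using inv1x[of b] assms that by simp
  have i2: "iv a \<odot> (a \<odot> (iv a \<odot> x)) = iv a \<odot> x" if "x \<in> C" for x
    using inv2x[of a] assms that by simp
  have i2b: "iv b \<odot> (b \<odot> (iv b \<odot> x)) = iv b \<odot> x" if "x \<in> C" for x
    using inv2x[of b] assms that by simp
  have "(a \<odot> b) \<odot> (iv b \<odot> iv a) \<odot> (a \<odot> b) = a \<odot> (b \<odot> (iv b \<odot> (iv a \<odot> (a \<odot> b))))"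
    using assms by (simp add: as)
  also have "\<dots> = a \<odot> (iv a \<odot> (a \<odot> (b \<odot> (iv b \<odot> b))))" using assms c1'[of b] by (simp only: cl)
  also have "\<dots> = a \<odot> b" using assms i1 i1b[of "fone S"] by simp
  finally have h1: "(a \<odot> b) \<odot> (iv b \<odot> iv a) \<odot> (a \<odot> b) = a \<odot> b" .
  have "(iv b \<odot> iv a) \<odot> (a \<odot> b) \<odot> (iv b \<odot> iv a) = iv b \<odot> (iv a \<odot> (a \<odot> (b \<odot> (iv b \<odot> iv a))))"
    using assms by (simp add: as)
  also have "\<dots> = iv b \<odot> (b \<odot> (iv b \<odot> (iv a \<odot> (a \<odot> iv a))))" using assms c1'[of "iv a"] ivC by (simp only: cl)
  also have "\<dots> = iv b \<odot> iv a" using assms i2b i2[of "fone S"] by simp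
  finally have h2: "(iv b \<odot> iv a) \<odot> (a \<odot> b) \<odot> (iv b \<odot> iv a) = iv b \<odot> iv a" .
  show ?thesis using uniq[OF cl[OF assms] cl[OF ivC[OF assms(2)] ivC[OF assms(1)]] h1 h2] by (rule sym)
qed


lemma inv_one: "iv (fone S) = fone S"
  using idem_self_inv[of "fone S"] by simp

end



fun nf :: "'a ftm \<Rightarrow> 'a word" where
  "nf (Gen x) = [(x, True)]"
| "nf Tone = []"
| "nf (Tmul s t) = nf s @ nf t"
| "nf (Tinv t) = winv (nf t)"
| "nf (Tm t) = red (nf t)"

lemma nf_word_tm[simp]: "nf (word_tm w) = w"
  by (induction w rule: word_tm.induct) (auto simp: ilet_def)

lemma gens_word_tm: "gens (word_tm w) = fst ` set w"
  by (induction w rule: word_tm.induct) auto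

lemma word_tm_tms[simp]: "word_tm w \<in> tms X \<longleftrightarrow> w \<in> wds X"
  by (simp add: tms_def wds_def gens_word_tm)

lemma tms_simps[simp]: "Gen x \<in> tms X \<longleftrightarrow> x \<in> X" "Tone \<in> tms X"
  "Tmul s t \<in> tms X \<longleftrightarrow> s \<in> tms X \<and> t \<in> tms X" "Tinv t \<in> tms X \<longleftrightarrow> t \<in> tms X"
  "Tm t \<in> tms X \<longleftrightarrow> t \<in> tms X"
  by (auto simp: tms_def)

lemma nf_wds: "t \<in> tms X \<Longrightarrow> nf t \<in> wds X"
  by (induction t) auto

section \<open>Quotients\<close>

lemma fcong_equiv: "fcong T \<theta> \<Longrightarrow> equiv T \<theta>" by (simp add: fcong_def)

lemma some_rel: assumes "equiv T \<theta>" "a \<in> T" shows "(a, SOME b. b \<in> \<theta> `` {a}) \<in> \<theta>"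
proof -
  have "a \<in> \<theta> `` {a}" using equiv_class_self[OF assms] .
  then have "(SOME b. b \<in> \<theta> `` {a}) \<in> \<theta> `` {a}" by (rule someI)
  then show ?thesis by simp
qed

lemma quot_car: "fcar (quot \<theta> T) = T // \<theta>" by (simp add: quot_def)
lemma quot_one: "fone (quot \<theta> T) = \<theta> `` {Tone}" by (simp add: quot_def)

lemma quot_mul: assumes "fcong T \<theta>" "a \<in> T" "b \<in> T"
  shows "fmul (quot \<theta> T) (\<theta> `` {a}) (\<theta> `` {b}) = \<theta> `` {Tmul a b}"
proof -
  have e: "equiv T \<theta>" using assms fcong_equiv by blast
  have "(Tmul a b, Tmul (SOME x. x \<in> \<theta> `` {a}) (SOME x. x \<in> \<theta> `` {b})) \<in> \<theta>"
    using assms(1) some_rel[OF e assms(2)] some_rel[OF e assms(3)] by (simp add: fcong_def)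
  then show ?thesis using equiv_class_eq[OF e] by (simp add: quot_def)
qed

lemma quot_inv: assumes "fcong T \<theta>" "a \<in> T"
  shows "finv (quot \<theta> T) (\<theta> `` {a}) = \<theta> `` {Tinv a}"
proof -
  have e: "equiv T \<theta>" using assms fcong_equiv by blast
  have "(Tinv a, Tinv (SOME x. x \<in> \<theta> `` {a})) \<in> \<theta>"
    using assms(1) some_rel[OF e assms(2)] by (simp add: fcong_def)
  then show ?thesis using equiv_class_eq[OF e] by (simp add: quot_def)
qed

lemma quot_mx: assumes "fcong T \<theta>" "a \<in> T"
  shows "fmx (quot \<theta> T) (\<theta> `` {a}) = \<theta> `` {Tm a}"
proof -
  have e: "equiv T \<theta>" using assms fcong_equiv by blast
  have "(Tm a, Tm (SOME x. x \<in> \<theta> `` {a})) \<in> \<theta>"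
    using assms(1) some_rel[OF e assms(2)] by (simp add: fcong_def)
  then show ?thesis using equiv_class_eq[OF e] by (simp add: quot_def)
qed

section \<open>The kernel congruence\<close>

definition th0 :: "'a set \<Rightarrow> ('a ftm \<times> 'a ftm) set" where
  "th0 X = {(s, t). s \<in> tms X \<and> t \<in> tms X \<and> nf s \<approx> nf t}"

lemma th0_equiv: "equiv (tms X) (th0 X)"
  by (rule equivI) (auto simp: th0_def refl_on_def sym_def trans_def intro: v_refl v_sym v_trans)

lemma th0_fcong: "fcong (tms X) (th0 X)"
  unfolding fcong_def
proof (intro conjI allI impI)
  show "equiv (tms X) (th0 X)" by (rule th0_equiv)
  fix a b c d
  show "(a, b) \<in> th0 X \<Longrightarrow> (c, d) \<in> th0 X \<Longrightarrow> (Tmul a c, Tmul b d) \<in> th0 X"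
    by (auto simp: th0_def intro: v_trans[OF vcr vcl])
  show "(a, b) \<in> th0 X \<Longrightarrow> (Tinv a, Tinv b) \<in> th0 X"
    by (auto simp: th0_def intro: v_winv)
  show "(a, b) \<in> th0 X \<Longrightarrow> (Tm a, Tm b) \<in> th0 X"
    by (auto simp: th0_def v_refl dest: v_red)
qed

lemma th0_R: "red_rel X \<subseteq> th0 X"
  by (auto simp: red_rel_def th0_def intro: v_refl)

lemma vag_equiv: "equiv (wds X) (vag X)"
  by (rule equivI) (auto simp: vag_def refl_on_def sym_def trans_def intro: v_refl v_sym v_trans)


lemma vag_iff: "(u, v) \<in> vag X \<longleftrightarrow> u \<in> wds X \<and> v \<in> wds X \<and> u \<approx> v"
  by (auto simp: vag_def)

lemma vag_eq: "u \<in> wds X \<Longrightarrow> v \<in> wds X \<Longrightarrow> vag X `` {u} = vag X `` {v} \<longleftrightarrow> u \<approx> v"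
  using equiv_class_eq_iff[OF vag_equiv, of u v X] by (simp add: vag_iff)

lemma vag_some: "u \<in> wds X \<Longrightarrow> (SOME a. a \<in> vag X `` {u}) \<in> wds X \<and> u \<approx> (SOME a. a \<in> vag X `` {u})"
  using some_rel[OF vag_equiv, of u X] by (simp add: vag_iff)

lemma FIM0_ws: "wstruct (FIM0 X) (\<lambda>u. vag X `` {u}) X"
proof
  show "fcar (FIM0 X) = (\<lambda>u. vag X `` {u}) ` wds X" by (auto simp: FIM0_def quotient_def)
  show "fone (FIM0 X) = vag X `` {[]}" by (simp add: FIM0_def)
  fix u v :: "'a word" assume u: "u \<in> wds X" and v: "v \<in> wds X"
  show "vag X `` {u} = vag X `` {v} \<longleftrightarrow> u \<approx> v" using vag_eq u v .
  show "fmul (FIM0 X) (vag X `` {u}) (vag X `` {v}) = vag X `` {u @ v}"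
    using vag_some[OF u] vag_some[OF v] u v
    by (simp add: FIM0_def vag_eq v_sym v_trans[OF vcr vcl])
  show "finv (FIM0 X) (vag X `` {u}) = vag X `` {winv u}"
    using vag_some[OF u] u by (simp add: FIM0_def vag_eq v_sym v_winv)
qed

lemma FIM_ws: "wstruct (FIM X) (\<lambda>u. vag X `` {u}) X"
  using FIM0_ws[of X] unfolding wstruct_def by (simp add: FIM_def)

lemma FIM_mx: "u \<in> wds X \<Longrightarrow> fmx (FIM X) (vag X `` {u}) = vag X `` {red u}"
  using wstruct.greatest[OF FIM0_ws, of u X] by (simp add: FIM_def)

lemma F_inverse_FIM: "F_inverse (FIM X)"
proof -
  interpret W: wstruct "FIM X" "\<lambda>u. vag X `` {u}" X by (rule FIM_ws)
  show ?thesis unfolding F_inverse_def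
  proof (intro conjI ballI)
    show "inv_monoid (FIM X)" by (rule W.inv_monoid)
  next
    fix a assume "a \<in> fcar (FIM X)"
    then obtain u where u: "u \<in> wds X" "a = vag X `` {u}" by (rule W.carE)
    have m: "fmx (FIM X) (vag X `` {u}) = vag X `` {red u}" by (rule FIM_mx[OF u(1)])
    show "fmx (FIM X) a \<in> fcar (FIM X)" using u by (simp add: m)
    show "fsigma (FIM X) a (fmx (FIM X) a)" using u W.sig1 by (simp add: m)
    fix b assume bC: "b \<in> fcar (FIM X)"
    show "fsigma (FIM X) a b \<longrightarrow> nle (FIM X) b (fmx (FIM X) a)"
      using u W.sig2 bC by (simp add: m)
  qed
qed

lemma th0_rel: "(s, t) \<in> th0 X \<longleftrightarrow> s \<in> tms X \<and> t \<in> tms X \<and> nf s \<approx> nf t"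
  by (simp add: th0_def)

lemma th0_eq: "s \<in> tms X \<Longrightarrow> t \<in> tms X \<Longrightarrow> th0 X `` {s} = th0 X `` {t} \<longleftrightarrow> nf s \<approx> nf t"
  using equiv_class_eq_iff[OF th0_equiv, of s t X] by (simp add: th0_rel)

lemma th0_nf: "t \<in> tms X \<Longrightarrow> th0 X `` {t} = th0 X `` {word_tm (nf t)}"
  by (simp add: th0_eq nf_wds v_refl)

lemma Q_ws: "wstruct (quot (th0 X) (tms X)) (\<lambda>u. th0 X `` {word_tm u}) X"
proof
  show "fcar (quot (th0 X) (tms X)) = (\<lambda>u. th0 X `` {word_tm u}) ` wds X"
    unfolding quot_car quotient_def
  proof (intro equalityI subsetI)
    fix A assume "A \<in> (\<Union>x\<in>tms X. {th0 X `` {x}})"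
    then obtain t where t: "t \<in> tms X" "A = th0 X `` {t}" by blast
    then have "A = th0 X `` {word_tm (nf t)}" using th0_nf by blast
    then show "A \<in> (\<lambda>u. th0 X `` {word_tm u}) ` wds X" using nf_wds[OF t(1)] by blast
  next
    fix A assume "A \<in> (\<lambda>u. th0 X `` {word_tm u}) ` wds X"
    then obtain u where "u \<in> wds X" "A = th0 X `` {word_tm u}" by blast
    then show "A \<in> (\<Union>x\<in>tms X. {th0 X `` {x}})" by auto
  qed
  show "fone (quot (th0 X) (tms X)) = th0 X `` {word_tm []}" by (simp add: quot_one)
  fix u v :: "'a word" assume u: "u \<in> wds X" and v: "v \<in> wds X"
  show "th0 X `` {word_tm u} = th0 X `` {word_tm v} \<longleftrightarrow> u \<approx> v" using u v by (simp add: th0_eq)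
  show "fmul (quot (th0 X) (tms X)) (th0 X `` {word_tm u}) (th0 X `` {word_tm v}) = th0 X `` {word_tm (u @ v)}"
    using u v by (simp add: quot_mul th0_fcong th0_eq v_refl)
  show "finv (quot (th0 X) (tms X)) (th0 X `` {word_tm u}) = th0 X `` {word_tm (winv u)}"
    using u by (simp add: quot_inv th0_fcong th0_eq v_refl)
qed

lemma Q_mx: "u \<in> wds X \<Longrightarrow> fmx (quot (th0 X) (tms X)) (th0 X `` {word_tm u}) = th0 X `` {word_tm (red u)}"
  by (simp add: quot_mx th0_fcong th0_eq v_refl)

lemma F_inverse_Q: "F_inverse (quot (th0 X) (tms X))"
proof -
  interpret W: wstruct "quot (th0 X) (tms X)" "\<lambda>u. th0 X `` {word_tm u}" X by (rule Q_ws)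
  show ?thesis unfolding F_inverse_def
  proof (intro conjI ballI)
    show "inv_monoid (quot (th0 X) (tms X))" by (rule W.inv_monoid)
  next
    fix a assume "a \<in> fcar (quot (th0 X) (tms X))"
    then obtain u where u: "u \<in> wds X" "a = th0 X `` {word_tm u}" by (rule W.carE)
    have m: "fmx (quot (th0 X) (tms X)) (th0 X `` {word_tm u}) = th0 X `` {word_tm (red u)}" by (rule Q_mx[OF u(1)])
    show "fmx (quot (th0 X) (tms X)) a \<in> fcar (quot (th0 X) (tms X))" using u by (simp add: m)
    show "fsigma (quot (th0 X) (tms X)) a (fmx (quot (th0 X) (tms X)) a)" using u W.sig1 by (simp add: m)
    fix b assume bC: "b \<in> fcar (quot (th0 X) (tms X))"
    show "fsigma (quot (th0 X) (tms X)) a b \<longrightarrow> nle (quot (th0 X) (tms X)) b (fmx (quot (th0 X) (tms X)) a)"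
      using u W.sig2 bC by (simp add: m)
  qed
qed



definition proj :: "'a set \<Rightarrow> 'a word \<Rightarrow> 'a word" where
  "proj X = filter (\<lambda>a. fst a \<in> X)"

lemma proj_append[simp]: "proj X (u @ v) = proj X u @ proj X v" by (simp add: proj_def)
lemma proj_winv[simp]: "proj X (winv u) = winv (proj X u)"
  by (induction u) (auto simp: proj_def ilet_def)
lemma proj_wds[simp]: "proj X u \<in> wds X" by (induction u) (auto simp: proj_def)
lemma proj_id: "u \<in> wds X \<Longrightarrow> proj X u = u" by (induction u) (auto simp: proj_def)

lemma th0_min:
  assumes fc: "fcong (tms X) \<theta>" and R: "red_rel X \<subseteq> \<theta>" and F: "F_inverse (quot \<theta> (tms X))"
  shows "th0 X \<subseteq> \<theta>"
proof -
  let ?S = "quot \<theta> (tms X)"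
  interpret I: invm ?S using F by (unfold_locales) (simp add: F_inverse_def)
  have e: "equiv (tms X) \<theta>" using fc by (rule fcong_equiv)
  define c where "c t = \<theta> `` {t}" for t
  have cC: "t \<in> tms X \<Longrightarrow> c t \<in> fcar ?S" for t by (simp add: c_def quot_car quotientI)
  have cmul: "a \<in> tms X \<Longrightarrow> b \<in> tms X \<Longrightarrow> c (Tmul a b) = fmul ?S (c a) (c b)" for a b
    by (simp add: c_def quot_mul[OF fc])
  have cinv: "a \<in> tms X \<Longrightarrow> c (Tinv a) = finv ?S (c a)" for a
    by (simp add: c_def quot_inv[OF fc])
  have cone: "c Tone = fone ?S" by (simp add: c_def quot_one)
  have L1: "c (word_tm (u @ v)) = fmul ?S (c (word_tm u)) (c (word_tm v))"
    if "u \<in> wds X" "v \<in> wds X" for u v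
    using that(1)
  proof (induction u)
    case Nil then show ?case using cone cC that(2) by simp
  next
    case (Cons a u)
    obtain x b where a: "a = (x, b)" by (cases a)
    define L where "L = (if b then Gen x else Tinv (Gen x))"
    have LC: "L \<in> tms X" using Cons a by (simp add: L_def)
    have "c (word_tm ((a # u) @ v)) = fmul ?S (c L) (c (word_tm (u @ v)))"
      using a LC Cons that(2) by (simp add: L_def[symmetric] cmul)
    also have "\<dots> = fmul ?S (c L) (fmul ?S (c (word_tm u)) (c (word_tm v)))" using Cons by simp
    also have "\<dots> = fmul ?S (fmul ?S (c L) (c (word_tm u))) (c (word_tm v))"
      using LC Cons that(2) cC by (simp add: I.as)
    also have "\<dots> = fmul ?S (c (word_tm (a # u))) (c (word_tm v))"
      using a LC Cons by (simp add: L_def[symmetric] cmul)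
    finally show ?case .
  qed
  have L2: "c (word_tm (winv u)) = finv ?S (c (word_tm u))" if "u \<in> wds X" for u
    using that
  proof (induction u)
    case Nil then show ?case using cone I.inv_one by simp
  next
    case (Cons a u)
    obtain x b where a: "a = (x, b)" by (cases a)
    define L where "L = (if b then Gen x else Tinv (Gen x))"
    have LC: "L \<in> tms X" using Cons a by (simp add: L_def)
    have il: "c (word_tm [ilet a]) = finv ?S (c L)"
      using Cons a cC by (cases b) (auto simp: ilet_def L_def cmul cinv cone I.inv_inv)
    have "c (word_tm (winv (a # u))) = fmul ?S (c (word_tm (winv u))) (c (word_tm [ilet a]))"
      using Cons a by (simp add: L1 ilet_def)
    also have "\<dots> = fmul ?S (finv ?S (c (word_tm u))) (finv ?S (c L))" using Cons il by simp
    also have "\<dots> = finv ?S (fmul ?S (c L) (c (word_tm u)))"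
      using LC Cons cC by (simp add: I.inv_mul)
    also have "\<dots> = finv ?S (c (word_tm (a # u)))"
      using a LC Cons by (simp add: L_def[symmetric] cmul)
    finally show ?case .
  qed
  have L3: "c t = c (word_tm (nf t))" if "t \<in> tms X" for t
    using that
  proof (induction t)
    case (Gen x) then show ?case using cC by (simp add: cmul cone)
  next
    case Tone then show ?case by simp
  next
    case (Tmul s t) then show ?case by (simp add: cmul L1 nf_wds)
  next
    case (Tinv t) then show ?case by (simp add: cinv L2 nf_wds)
  next
    case (Tm t)
    then have "t \<in> tms X" by simp
    have r1: "(t, word_tm (nf t)) \<in> \<theta>"
    proof -
      have wt: "word_tm (nf t) \<in> tms X" using nf_wds[OF \<open>t \<in> tms X\<close>] by simp
      have "\<theta> `` {t} = \<theta> `` {word_tm (nf t)}" using Tm \<open>t \<in> tms X\<close> by (simp add: c_def)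
      then show ?thesis using eq_equiv_class[OF _ e wt] by blast
    qed
    then have "(Tm t, Tm (word_tm (nf t))) \<in> \<theta>" using fc by (simp add: fcong_def)
    moreover have "(word_tm (red (nf t)), Tm (word_tm (nf t))) \<in> \<theta>"
      using R nf_wds[OF \<open>t \<in> tms X\<close>] by (auto simp: red_rel_def)
    ultimately have "(Tm t, word_tm (red (nf t))) \<in> \<theta>" using e
      by (meson equiv_def symE transE)
    then show ?case by (simp add: c_def equiv_class_eq[OF e])
  qed
  have L4: "u \<approx> v \<Longrightarrow> c (word_tm (proj X u)) = c (word_tm (proj X v))" for u v
  proof (induction rule: vagner.induct)
    case (v_cong u v p q) then show ?case by (simp add: L1)
  next
    case (v_ax1 w)
    have "c (word_tm (proj X (w @ winv w @ w))) = fmul ?S (c (word_tm (proj X w)))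
        (fmul ?S (finv ?S (c (word_tm (proj X w)))) (c (word_tm (proj X w))))"
      by (simp add: L1 L2)
    also have "\<dots> = c (word_tm (proj X w))" using I.inv1 cC by (simp add: I.as)
    finally show ?case .
  next
    case (v_ax2 w v)
    define a where "a = c (word_tm (proj X w))"
    define b where "b = c (word_tm (proj X v))"
    have aC: "a \<in> fcar ?S" "b \<in> fcar ?S" using cC by (simp_all add: a_def b_def)
    have "c (word_tm (proj X (w @ winv w @ v @ winv v))) = fmul ?S (fmul ?S a (finv ?S a)) (fmul ?S b (finv ?S b))"
      using aC by (simp add: L1 L2 a_def b_def I.as)
    also have "\<dots> = fmul ?S (fmul ?S b (finv ?S b)) (fmul ?S a (finv ?S a))"
      using aC I.idem_comm I.proj_id by simp
    also have "\<dots> = c (word_tm (proj X (v @ winv v @ w @ winv w)))"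
      using aC by (simp add: L1 L2 a_def b_def I.as)
    finally show ?case .
  qed auto
  show ?thesis
  proof
    fix p assume "p \<in> th0 X"
    then obtain s t where p: "p = (s, t)" "s \<in> tms X" "t \<in> tms X" "nf s \<approx> nf t" by (auto simp: th0_def)
    have "c s = c (word_tm (proj X (nf s)))" using L3 p nf_wds proj_id by metis
    also have "\<dots> = c (word_tm (proj X (nf t)))" using L4 p by blast
    also have "\<dots> = c t" using L3 p nf_wds proj_id by metis
    finally have "\<theta> `` {s} = \<theta> `` {t}" by (simp add: c_def)
    then show "p \<in> \<theta>" using eq_equiv_class[OF _ e p(3)] p by simp
  qed
qed

lemma pres_th0: "pres_cong X (red_rel X) = th0 X"
  unfolding pres_cong_def
proof (rule equalityI)
  show "\<Inter> {\<theta>. fcong (tms X) \<theta> \<and> red_rel X \<subseteq> \<theta> \<and> F_inverse (quot \<theta> (tms X))} \<subseteq> th0 X"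
    by (rule Inter_lower) (simp add: th0_fcong th0_R F_inverse_Q)
  show "th0 X \<subseteq> \<Inter> {\<theta>. fcong (tms X) \<theta> \<and> red_rel X \<subseteq> \<theta> \<and> F_inverse (quot \<theta> (tms X))}"
    by (rule Inter_greatest) (use th0_min in blast)
qed



definition phi :: "'a set \<Rightarrow> 'a ftm set \<Rightarrow> 'a word set" where
  "phi X A = vag X `` {nf (SOME t. t \<in> A)}"

lemma phi_cls: assumes "t \<in> tms X" shows "phi X (th0 X `` {t}) = vag X `` {nf t}"
proof -
  define s where "s = (SOME s. s \<in> th0 X `` {t})"
  have "(t, s) \<in> th0 X" unfolding s_def by (rule some_rel[OF th0_equiv assms])
  then have "s \<in> tms X" "nf t \<approx> nf s" by (auto simp: th0_rel)
  then have "vag X `` {nf s} = vag X `` {nf t}" using assms by (simp add: vag_eq nf_wds v_sym)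
  then show ?thesis by (simp add: phi_def s_def)
qed

theorem mainTheorem12:
  fixes X :: "'a set"
  shows "F_inverse (FIM X) \<and>
    (\<exists>\<phi>. bij_betw \<phi> (fcar (FInv X (red_rel X))) (fcar (FIM X)) \<and>
         fhom \<phi> (FInv X (red_rel X)) (FIM X) \<and>
         (\<forall>x\<in>X. \<phi> (pres_cong X (red_rel X) `` {Gen x}) = vag X `` {[(x, True)]}))"
proof -
  interpret W: wstruct "FIM X" "\<lambda>u. vag X `` {u}" X by (rule FIM_ws)
  have FI: "FInv X (red_rel X) = quot (th0 X) (tms X)" by (simp add: FInv_def pres_th0)
  have carQ: "fcar (quot (th0 X) (tms X)) = tms X // th0 X" by (rule quot_car)
  have bij: "bij_betw (phi X) (tms X // th0 X) (fcar (FIM X))"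
    unfolding bij_betw_def
  proof
    show "inj_on (phi X) (tms X // th0 X)"
    proof (rule inj_onI)
      fix A B assume A: "A \<in> tms X // th0 X" and B: "B \<in> tms X // th0 X" and eq: "phi X A = phi X B"
      obtain s where s: "s \<in> tms X" "A = th0 X `` {s}" using A by (rule quotientE)
      obtain t where t: "t \<in> tms X" "B = th0 X `` {t}" using B by (rule quotientE)
      have "nf s \<approx> nf t" using eq s t by (simp add: phi_cls vag_eq nf_wds)
      then show "A = B" using s t by (simp add: th0_eq)
    qed
    show "phi X ` (tms X // th0 X) = fcar (FIM X)"
    proof (rule equalityI; rule subsetI)
      fix y assume "y \<in> phi X ` (tms X // th0 X)"
      then obtain A where A: "A \<in> tms X // th0 X" "y = phi X A" by blast
      obtain s where s: "s \<in> tms X" "A = th0 X `` {s}" using A(1) by (rule quotientE)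
      show "y \<in> fcar (FIM X)" using A s by (simp add: phi_cls nf_wds)
    next
      fix y assume "y \<in> fcar (FIM X)"
      then obtain u where u: "u \<in> wds X" "y = vag X `` {u}" by (rule W.carE)
      have "phi X (th0 X `` {word_tm u}) = y" using u by (simp add: phi_cls)
      moreover have "th0 X `` {word_tm u} \<in> tms X // th0 X" using u by (simp add: quotientI)
      ultimately show "y \<in> phi X ` (tms X // th0 X)" by blast
    qed
  qed
  have hom: "fhom (phi X) (quot (th0 X) (tms X)) (FIM X)"
    unfolding fhom_def carQ
  proof (intro conjI ballI)
    fix A B assume A: "A \<in> tms X // th0 X" and B: "B \<in> tms X // th0 X"
    obtain s where s: "s \<in> tms X" "A = th0 X `` {s}" using A by (rule quotientE)
    obtain t where t: "t \<in> tms X" "B = th0 X `` {t}" using B by (rule quotientE)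
    show "phi X (fmul (quot (th0 X) (tms X)) A B) = fmul (FIM X) (phi X A) (phi X B)"
      using s t by (simp add: quot_mul th0_fcong phi_cls W.mul nf_wds)
  next
    show "phi X (fone (quot (th0 X) (tms X))) = fone (FIM X)"
      by (simp add: quot_one phi_cls W.one)
  next
    fix A assume A: "A \<in> tms X // th0 X"
    obtain s where s: "s \<in> tms X" "A = th0 X `` {s}" using A by (rule quotientE)
    show "phi X (finv (quot (th0 X) (tms X)) A) = finv (FIM X) (phi X A)"
      using s by (simp add: quot_inv th0_fcong phi_cls W.inv nf_wds)
  next
    fix A assume A: "A \<in> tms X // th0 X"
    obtain s where s: "s \<in> tms X" "A = th0 X `` {s}" using A by (rule quotientE)
    show "phi X (fmx (quot (th0 X) (tms X)) A) = fmx (FIM X) (phi X A)"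
      using s by (simp add: quot_mx th0_fcong phi_cls FIM_mx nf_wds)
  qed
  have gen: "\<forall>x\<in>X. phi X (pres_cong X (red_rel X) `` {Gen x}) = vag X `` {[(x, True)]}"
    by (simp add: pres_th0 phi_cls)
  show ?thesis using F_inverse_FIM bij hom gen FI carQ by metis
qed


end
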